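(* Let $(z_t)_{t \geq 0}$ be a real-valued trend-stationary Gaussian process whose mean function $t \mapsto \mathrm{E}(z_t)$ is differentiable. If $(z_t)_{t\ge 0}$ is mean square differentiable and Markovian, then its covariance function is constant, or equivalently $(z_t)_{t \geq 0}$ is almost surely equal to its mean function plus a constant: for all $u, v \geq 0$, $z_u - \mathrm{E}(z_u) = z_v - \mathrm{E}(z_v)$ almost surely.
   Context: A real-valued Gaussian process $(z_t)_{t\ge 0}$ is called trend-stationary if it has an arbitrary mean function $m(t)=\mathrm{E}(z_t)$ and a translation-invariant covariance function, i.e. there is a function $k$ with $\mathrm{cov}(z_u,z_v)=k(u-v)$ for all $u,v\ge 0$. Differentiability of the process is understood in the mean square sense. *)

theory Defs
  imports "HOL-Probability.Probability"
begin

definition gaussian_rv :: "'a measure \<Rightarrow> ('a \<Rightarrow> real) \<Rightarrow> bool" where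
  "gaussian_rv M X \<longleftrightarrow> X \<in> borel_measurable M \<and>
     ((\<exists>\<mu> \<sigma>. \<sigma> > 0 \<and> distributed M lborel X (normal_density \<mu> \<sigma>)) \<or>
      (\<exists>c. AE x in M. X x = c))"

text \<open>Gaussian process indexed by t \<ge> 0: every finite linear combination of its
  values is Gaussian (equivalently, all finite-dimensional distributions are jointly Gaussian).\<close>
definition gaussian_process :: "'a measure \<Rightarrow> (real \<Rightarrow> 'a \<Rightarrow> real) \<Rightarrow> bool" where
  "gaussian_process M z \<longleftrightarrow>
     (\<forall>T (c :: real \<Rightarrow> real). finite T \<and> T \<subseteq> {0..} \<longrightarrow>
        gaussian_rv M (\<lambda>x. \<Sum>t\<in>T. c t * z t x))"

definition mean_fun :: "'a measure \<Rightarrow> (real \<Rightarrow> 'a \<Rightarrow> real) \<Rightarrow> real \<Rightarrow> real" where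
  "mean_fun M z t = integral\<^sup>L M (z t)"

definition cov_fun :: "'a measure \<Rightarrow> (real \<Rightarrow> 'a \<Rightarrow> real) \<Rightarrow> real \<Rightarrow> real \<Rightarrow> real" where
  "cov_fun M z u v = integral\<^sup>L M (\<lambda>x. (z u x - mean_fun M z u) * (z v x - mean_fun M z v))"

definition trend_stationary :: "'a measure \<Rightarrow> (real \<Rightarrow> 'a \<Rightarrow> real) \<Rightarrow> bool" where
  "trend_stationary M z \<longleftrightarrow>
     (\<exists>k. \<forall>u v. u \<ge> 0 \<longrightarrow> v \<ge> 0 \<longrightarrow> cov_fun M z u v = k (u - v))"

definition ms_differentiable :: "'a measure \<Rightarrow> (real \<Rightarrow> 'a \<Rightarrow> real) \<Rightarrow> bool" where
  "ms_differentiable M z \<longleftrightarrow>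
     (\<forall>t\<ge>0. \<exists>D \<in> borel_measurable M. integrable M (\<lambda>x. (D x)\<^sup>2) \<and>
        ((\<lambda>h. integral\<^sup>L M (\<lambda>x. ((z (t + h) x - z t x) / h - D x)\<^sup>2)) \<longlongrightarrow> 0)
          (at 0 within {-t..}))"

definition past_algebra :: "'a measure \<Rightarrow> (real \<Rightarrow> 'a \<Rightarrow> real) \<Rightarrow> real \<Rightarrow> 'a measure" where
  "past_algebra M z s = sigma (space M)
     {z r -` A \<inter> space M | r A. 0 \<le> r \<and> r \<le> s \<and> A \<in> sets borel}"

definition present_algebra :: "'a measure \<Rightarrow> (real \<Rightarrow> 'a \<Rightarrow> real) \<Rightarrow> real \<Rightarrow> 'a measure" where
  "present_algebra M z s = sigma (space M) {z s -` A \<inter> space M | A. A \<in> sets borel}"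

definition markovian :: "'a measure \<Rightarrow> (real \<Rightarrow> 'a \<Rightarrow> real) \<Rightarrow> bool" where
  "markovian M z \<longleftrightarrow>
     (\<forall>s t (f :: real \<Rightarrow> real). 0 \<le> s \<longrightarrow> s \<le> t \<longrightarrow> f \<in> borel_measurable borel \<longrightarrow>
        bounded (range f) \<longrightarrow>
        (AE x in M. real_cond_exp M (past_algebra M z s) (\<lambda>\<omega>. f (z t \<omega>)) x =
                    real_cond_exp M (present_algebra M z s) (\<lambda>\<omega>. f (z t \<omega>)) x))"

end

theory Submission
  imports Defs
begin


lemma gaussian_basic:
  assumes P: "prob_space M" and G: "gaussian_rv M X"
  shows "X \<in> borel_measurable M" "integrable M X" "integrable M (\<lambda>x. (X x)^2)"
    "(CLINT x|M. iexp (X x)) = iexp (integral\<^sup>L M X) *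
        complex_of_real (exp (- (integral\<^sup>L M (\<lambda>x. (X x - integral\<^sup>L M X)^2)) / 2))"
proof -
  interpret prob_space M by fact
  have Xm[measurable]: "X \<in> borel_measurable M" using G by (simp add: gaussian_rv_def)
  then show "X \<in> borel_measurable M" .
  from G consider (n) \<mu> \<sigma> where "\<sigma> > 0" "distributed M lborel X (normal_density \<mu> \<sigma>)"
    | (c) c where "AE x in M. X x = c" by (auto simp: gaussian_rv_def)
  then have "integrable M X \<and> integrable M (\<lambda>x. (X x)^2) \<and> (CLINT x|M. iexp (X x)) = iexp (integral\<^sup>L M X) *
        complex_of_real (exp (- (integral\<^sup>L M (\<lambda>x. (X x - integral\<^sup>L M X)^2)) / 2))"
  proof cases
    case (n \<mu> \<sigma>)
    define S where "S = (\<lambda>x. (X x - \<mu>) / \<sigma>)"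
    have SD: "distributed M lborel S std_normal_density"
      using n normal_standard_normal_convert[of \<sigma> X \<mu>] by (simp add: S_def)
    have Sm[measurable]: "S \<in> borel_measurable M" unfolding S_def by measurable
    have XS: "X x = \<mu> + \<sigma> * S x" for x using n(1) by (simp add: S_def)
    have iS: "integrable M (\<lambda>x. S x ^ k)" for k
      using distributed_integrable[OF SD, of "\<lambda>x. x ^ k"] integrable_std_normal_moment[of k] by simp
    have iX: "integrable M X" unfolding XS using iS[of 1] by simp
    have iX2: "integrable M (\<lambda>x. (X x)^2)" unfolding XS power2_sum
      using iS[of 1] iS[of 2] by (simp add: power_mult_distrib)
    have EX: "integral\<^sup>L M X = \<mu>" by (rule normal_distributed_expectation[OF n])
    have VX: "integral\<^sup>L M (\<lambda>x. (X x - integral\<^sup>L M X)^2) = \<sigma>^2"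
      by (rule normal_distributed_variance[OF n])
    have dS: "distr M lborel S = density lborel std_normal_density"
      using SD by (simp add: distributed_distr_eq_density)
    have "(CLINT x|M. iexp (\<sigma> * S x)) = (CLINT x|distr M lborel S. iexp (\<sigma> * x))"
      by (subst integral_distr) auto
    also have "\<dots> = char std_normal_distribution \<sigma>" unfolding dS char_def by simp
    also have "\<dots> = exp (- (\<sigma>^2) / 2)" by (simp add: char_std_normal_distribution)
    finally have cS: "(CLINT x|M. iexp (\<sigma> * S x)) = exp (- (\<sigma>^2) / 2)" .
    have "(CLINT x|M. iexp (X x)) = (CLINT x|M. iexp \<mu> * iexp (\<sigma> * S x))"
      unfolding XS by (simp add: exp_add[symmetric] algebra_simps)
    also have "\<dots> = iexp \<mu> * (CLINT x|M. iexp (\<sigma> * S x))" by simp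
    finally show ?thesis using cS iX iX2 EX VX by simp
  next
    case (c c)
    have iX: "integrable M X" by (rule integrable_cong_AE[THEN iffD2, of _ _ "\<lambda>_. c"]) (use c in auto)
    have iX2: "integrable M (\<lambda>x. (X x)^2)"
      by (rule integrable_cong_AE[THEN iffD2, of _ _ "\<lambda>_. c^2"]) (use c in auto)
    have EX: "integral\<^sup>L M X = c" using integral_cong_AE[of X M "\<lambda>_. c"] c by (simp add: prob_space)
    have VX: "integral\<^sup>L M (\<lambda>x. (X x - integral\<^sup>L M X)^2) = 0"
      using integral_cong_AE[of "\<lambda>x. (X x - c)^2" M "\<lambda>_. 0"] c by (simp add: EX prob_space)
    have "(CLINT x|M. iexp (X x)) = (CLINT x|M. iexp c)"
      by (rule integral_cong_AE) (use c in auto)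
    then show ?thesis using iX iX2 EX VX by (simp add: prob_space)
  qed
  then show "integrable M X" "integrable M (\<lambda>x. (X x)^2)"
    "(CLINT x|M. iexp (X x)) = iexp (integral\<^sup>L M X) *
        complex_of_real (exp (- (integral\<^sup>L M (\<lambda>x. (X x - integral\<^sup>L M X)^2)) / 2))" by auto
qed


lemma abs_mult_le_sq: "\<bar>(a::real) * b\<bar> \<le> a^2 + b^2"
proof -
  have "0 \<le> (\<bar>a\<bar> - \<bar>b\<bar>)^2" by simp
  then have "2 * (\<bar>a\<bar> * \<bar>b\<bar>) \<le> a^2 + b^2" by (simp add: power2_eq_square algebra_simps)
  moreover have "0 \<le> \<bar>a\<bar> * \<bar>b\<bar>" by simp
  ultimately have "\<bar>a\<bar> * \<bar>b\<bar> \<le> a^2 + b^2" by linarith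
  then show ?thesis by (simp add: abs_mult)
qed

lemma iexp_taylor1: "cmod (iexp x - (1 + \<i> * x)) \<le> x^2/2"
  using iexp_approx1[of x 1] by (simp add: power2_eq_square)

lemma L2_mult:
  fixes f g :: "'a \<Rightarrow> real"
  assumes [measurable]: "f \<in> borel_measurable M" "g \<in> borel_measurable M"
    and "integrable M (\<lambda>x. (f x)^2)" "integrable M (\<lambda>x. (g x)^2)"
  shows "integrable M (\<lambda>x. f x * g x)"
proof (rule Bochner_Integration.integrable_bound[where f="\<lambda>x. (f x)^2 + (g x)^2"])
  show "integrable M (\<lambda>x. (f x)^2 + (g x)^2)" using assms by auto
  show "AE x in M. norm (f x * g x) \<le> norm ((f x)^2 + (g x)^2)"
    using abs_mult_le_sq by auto
qed auto

lemma L2_shift: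
  fixes f :: "'a \<Rightarrow> real"
  assumes P: "prob_space M" and [measurable]: "f \<in> borel_measurable M"
    and "integrable M f" "integrable M (\<lambda>x. (f x)^2)"
  shows "integrable M (\<lambda>x. (f x - c)^2)"
proof -
  interpret prob_space M by fact
  have "(\<lambda>x. (f x - c)^2) = (\<lambda>x. (f x)^2 - 2 * c * f x + c^2)"
    by (auto simp: power2_eq_square algebra_simps)
  then show ?thesis using assms by simp
qed

lemma dens_distr_aux:
  fixes g Y :: "'a \<Rightarrow> real" and m :: real
  assumes P: "prob_space M" and [measurable]: "g \<in> borel_measurable M" "Y \<in> borel_measurable M"
    and nn: "\<And>x. x \<in> space M \<Longrightarrow> 0 \<le> g x" and ig: "integrable M g"
    and m: "integral\<^sup>L M g = m" "m > 0"
  shows "real_distribution (distr (density M (\<lambda>x. ennreal (g x / m))) borel Y)"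
    and "\<And>h::real \<Rightarrow> 'b::{banach,second_countable_topology}. h \<in> borel_measurable borel \<Longrightarrow>
       integral\<^sup>L (distr (density M (\<lambda>x. ennreal (g x / m))) borel Y) h =
       integral\<^sup>L M (\<lambda>x. (g x / m) *\<^sub>R h (Y x))"
proof -
  interpret prob_space M by fact
  have "emeasure (density M (\<lambda>x. ennreal (g x / m))) (space M) = (\<integral>\<^sup>+x. ennreal (g x / m) \<partial>M)"
    by (subst emeasure_density) (auto intro!: nn_integral_cong)
  also have "\<dots> = ennreal (integral\<^sup>L M (\<lambda>x. g x / m))"
    by (rule nn_integral_eq_integral) (use ig nn m in auto)
  also have "\<dots> = 1" using m by simp
  finally have "prob_space (density M (\<lambda>x. ennreal (g x / m)))"
    by (intro prob_spaceI) simp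
  then show "real_distribution (distr (density M (\<lambda>x. ennreal (g x / m))) borel Y)"
    unfolding real_distribution_def real_distribution_axioms_def
    by (auto intro!: prob_space.prob_space_distr)
  fix h :: "real \<Rightarrow> 'b::{banach,second_countable_topology}"
  assume [measurable]: "h \<in> borel_measurable borel"
  have "integral\<^sup>L (distr (density M (\<lambda>x. ennreal (g x / m))) borel Y) h =
        integral\<^sup>L (density M (\<lambda>x. ennreal (g x / m))) (\<lambda>x. h (Y x))"
    by (subst integral_distr) auto
  also have "\<dots> = integral\<^sup>L M (\<lambda>x. (g x / m) *\<^sub>R h (Y x))"
    by (subst integral_density) (use nn m in auto)
  finally show "integral\<^sup>L (distr (density M (\<lambda>x. ennreal (g x / m))) borel Y) h =
       integral\<^sup>L M (\<lambda>x. (g x / m) *\<^sub>R h (Y x))" .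
qed

lemma fourier_zero_orth:
  fixes f Y :: "'a \<Rightarrow> real"
  assumes P: "prob_space M" and [measurable]: "f \<in> borel_measurable M" "Y \<in> borel_measurable M"
    and f: "integrable M f"
    and J: "\<And>b. (CLINT x|M. complex_of_real (f x) * iexp (b * Y x)) = 0"
    and B[measurable]: "B \<in> sets borel"
  shows "integral\<^sup>L M (\<lambda>x. f x * indicator B (Y x)) = 0"
proof -
  interpret prob_space M by fact
  define Pf where "Pf = (\<lambda>x. max (f x) 0)"
  define Nf where "Nf = (\<lambda>x. max (- f x) 0)"
  have [measurable]: "Pf \<in> borel_measurable M" "Nf \<in> borel_measurable M" unfolding Pf_def Nf_def by auto
  have iP: "integrable M Pf" "integrable M Nf" unfolding Pf_def Nf_def using f by auto
  have fPN: "f x = Pf x - Nf x" for x unfolding Pf_def Nf_def by auto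
  have "(CLINT x|M. complex_of_real (f x)) = 0" using J[of 0] by simp
  then have "integral\<^sup>L M f = 0"
    by (metis integral_complex_of_real of_real_eq_0_iff)
  then have PN: "integral\<^sup>L M Pf = integral\<^sup>L M Nf" unfolding fPN using iP by simp
  define m where "m = integral\<^sup>L M Pf"
  have nnP: "0 \<le> Pf x" "0 \<le> Nf x" for x unfolding Pf_def Nf_def by auto
  have "m \<ge> 0" unfolding m_def using nnP by (simp add: integral_nonneg_AE)
  show ?thesis
  proof (cases "m = 0")
    case True
    have "AE x in M. Pf x = 0" using integral_nonneg_eq_0_iff_AE[of M Pf] iP nnP True m_def by auto
    moreover have "AE x in M. Nf x = 0" using integral_nonneg_eq_0_iff_AE[of M Nf] iP nnP True m_def PN by auto
    ultimately have "AE x in M. f x * indicator B (Y x) = 0" by eventually_elim (simp add: fPN)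
    then have "integral\<^sup>L M (\<lambda>x. f x * indicator B (Y x)) = integral\<^sup>L M (\<lambda>_. 0::real)"
      by (intro integral_cong_AE) auto
    then show ?thesis by simp
  next
    case False
    with \<open>m \<ge> 0\<close> have mpos: "m > 0" by simp
    let ?muP = "distr (density M (\<lambda>x. ennreal (Pf x / m))) borel Y"
    let ?muN = "distr (density M (\<lambda>x. ennreal (Nf x / m))) borel Y"
    note dP = dens_distr_aux[OF P, of Pf Y m] and dN = dens_distr_aux[OF P, of Nf Y m]
    have rP: "real_distribution ?muP" using dP iP nnP mpos by (simp add: m_def)
    have rN: "real_distribution ?muN" using dN iP nnP mpos PN by (simp add: m_def)
    have intP: "integral\<^sup>L ?muP h = integral\<^sup>L M (\<lambda>x. (Pf x / m) *\<^sub>R h (Y x))"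
      if "h \<in> borel_measurable borel" for h :: "real \<Rightarrow> 'c::{banach,second_countable_topology}"
      using dP(2)[OF _ _ _ _ _ _ that] iP nnP mpos by (simp add: m_def)
    have intN: "integral\<^sup>L ?muN h = integral\<^sup>L M (\<lambda>x. (Nf x / m) *\<^sub>R h (Y x))"
      if "h \<in> borel_measurable borel" for h :: "real \<Rightarrow> 'c::{banach,second_countable_topology}"
      using dN(2)[OF _ _ _ _ _ _ that] iP nnP mpos PN by (simp add: m_def)
    have "char ?muP = char ?muN"
    proof
      fix b
      have ib: "integrable M (\<lambda>x. (Pf x / m) *\<^sub>R iexp (b * Y x))" "integrable M (\<lambda>x. (Nf x / m) *\<^sub>R iexp (b * Y x))"
      proof -
        have "integrable M (\<lambda>x. Pf x / m)" "integrable M (\<lambda>x. Nf x / m)" using iP by auto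
        then show "integrable M (\<lambda>x. (Pf x / m) *\<^sub>R iexp (b * Y x))" "integrable M (\<lambda>x. (Nf x / m) *\<^sub>R iexp (b * Y x))"
          by (auto intro: Bochner_Integration.integrable_bound[where f="\<lambda>x. Pf x / m"] simp: norm_mult,
              auto intro: Bochner_Integration.integrable_bound[where f="\<lambda>x. Nf x / m"] simp: norm_mult)
      qed
      have "char ?muP b - char ?muN b =
          integral\<^sup>L M (\<lambda>x. (Pf x / m) *\<^sub>R iexp (b * Y x)) - integral\<^sup>L M (\<lambda>x. (Nf x / m) *\<^sub>R iexp (b * Y x))"
        unfolding char_def by (simp add: intP intN)
      also have "\<dots> = integral\<^sup>L M (\<lambda>x. (Pf x / m) *\<^sub>R iexp (b * Y x) - (Nf x / m) *\<^sub>R iexp (b * Y x))"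
        using ib by simp
      also have "\<dots> = integral\<^sup>L M (\<lambda>x. complex_of_real (f x) * iexp (b * Y x) / m)"
        by (rule Bochner_Integration.integral_cong) (auto simp: fPN scaleR_conv_of_real diff_divide_distrib left_diff_distrib)
      also have "\<dots> = 0" using J[of b] by simp
      finally show "char ?muP b = char ?muN b" by simp
    qed
    then have eq: "?muP = ?muN" using Levy_uniqueness rP rN by blast
    have hb: "(indicator B :: real \<Rightarrow> real) \<in> borel_measurable borel" by simp
    have "integral\<^sup>L ?muP (indicator B :: real \<Rightarrow> real) = integral\<^sup>L ?muN (indicator B)" using eq by simp
    then have e1: "integral\<^sup>L M (\<lambda>x. (Pf x / m) *\<^sub>R (indicator B (Y x) :: real)) = integral\<^sup>L M (\<lambda>x. (Nf x / m) *\<^sub>R (indicator B (Y x) :: real))"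
      using intP[OF hb] intN[OF hb] by (metis (no_types))
    have cP: "(\<lambda>x. Pf x * indicator B (Y x)) = (\<lambda>x. m * ((Pf x / m) *\<^sub>R (indicator B (Y x) :: real)))"
      "(\<lambda>x. Nf x * indicator B (Y x)) = (\<lambda>x. m * ((Nf x / m) *\<^sub>R (indicator B (Y x) :: real)))"
      using mpos by auto
    have e2: "integral\<^sup>L M (\<lambda>x. Pf x * indicator B (Y x)) = integral\<^sup>L M (\<lambda>x. Nf x * indicator B (Y x))"
      unfolding cP integral_mult_right_zero e1 ..
    have "integrable M (\<lambda>x. Pf x * indicator B (Y x))" "integrable M (\<lambda>x. Nf x * indicator B (Y x))"
      using iP by (auto intro: Bochner_Integration.integrable_bound[where f=Pf] simp: indicator_def,
          auto intro: Bochner_Integration.integrable_bound[where f=Nf] simp: indicator_def)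
    then show ?thesis unfolding fPN left_diff_distrib using e2 by simp
  qed
qed

lemma gauss_char_zero:
  fixes W Y :: "'a \<Rightarrow> real"
  assumes P: "prob_space M"
   and G: "\<And>a b. gaussian_rv M (\<lambda>x. a * W x + b * Y x)"
   and C: "integral\<^sup>L M (\<lambda>x. (W x - integral\<^sup>L M W) * (Y x - integral\<^sup>L M Y)) = 0"
  shows "(CLINT x|M. complex_of_real (W x - integral\<^sup>L M W) * iexp (b * Y x)) = 0"
proof -
  interpret prob_space M by fact
  have gW: "gaussian_rv M W" using G[of 1 0] by simp
  have gY: "gaussian_rv M Y" using G[of 0 1] by simp
  note bW = gaussian_basic[OF P gW] and bY = gaussian_basic[OF P gY]
  have [measurable]: "W \<in> borel_measurable M" "Y \<in> borel_measurable M" using bW bY by auto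
  define EW where "EW = integral\<^sup>L M W"
  define EY where "EY = integral\<^sup>L M Y"
  define W0 where "W0 = (\<lambda>x. W x - EW)"
  define Y0 where "Y0 = (\<lambda>x. Y x - EY)"
  define VW where "VW = integral\<^sup>L M (\<lambda>x. (W0 x)^2)"
  define VY where "VY = integral\<^sup>L M (\<lambda>x. (Y0 x)^2)"
  have [measurable]: "W0 \<in> borel_measurable M" "Y0 \<in> borel_measurable M" unfolding W0_def Y0_def by auto
  have iW0: "integrable M (\<lambda>x. (W0 x)^2)" unfolding W0_def using L2_shift[OF P] bW by auto
  have iY0: "integrable M (\<lambda>x. (Y0 x)^2)" unfolding Y0_def using L2_shift[OF P] bY by auto
  have iWY: "integrable M (\<lambda>x. W0 x * Y0 x)" by (rule L2_mult) (use iW0 iY0 in auto)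
  have iW01: "integrable M W0" unfolding W0_def using bW by auto
  have VWnn: "VW \<ge> 0" "VY \<ge> 0" unfolding VW_def VY_def by auto
  have C0: "integral\<^sup>L M (\<lambda>x. W0 x * Y0 x) = 0" using C by (simp add: W0_def Y0_def EW_def EY_def)
  have cf: "(CLINT x|M. iexp (a * W x + b * Y x)) = iexp (a * EW + b * EY) * complex_of_real (exp (- (a^2 * VW + b^2 * VY) / 2))"
    for a b
  proof -
    note bX = gaussian_basic[OF P G[of a b]]
    have E: "integral\<^sup>L M (\<lambda>x. a * W x + b * Y x) = a * EW + b * EY"
      using bW bY by (simp add: EW_def EY_def)
    have "(\<lambda>x. (a * W x + b * Y x - (a * EW + b * EY))^2) =
          (\<lambda>x. a^2 * (W0 x)^2 + 2 * a * b * (W0 x * Y0 x) + b^2 * (Y0 x)^2)"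
      by (auto simp: W0_def Y0_def power2_eq_square algebra_simps)
    then have V: "integral\<^sup>L M (\<lambda>x. (a * W x + b * Y x - (a * EW + b * EY))^2) = a^2 * VW + b^2 * VY"
      using iW0 iY0 iWY C0 by (simp add: VW_def VY_def)
    show ?thesis using bX(4) unfolding E V .
  qed
  define K where "K = iexp (b * EY) * complex_of_real (exp (- (b^2 * VY) / 2))"
  define J where "J = (CLINT x|M. complex_of_real (W0 x) * iexp (b * Y x))"
  have normK: "norm K \<le> 1" unfolding K_def using VWnn by (simp add: norm_mult)
  have bnd: "norm J \<le> a * VW" if apos: "a > 0" for a
  proof -
    have c1: "(CLINT x|M. iexp (a * W0 x + b * Y x)) = K * complex_of_real (exp (- (a^2 * VW) / 2))"
    proof -
      have "(CLINT x|M. iexp (a * W0 x + b * Y x)) = (CLINT x|M. iexp (- a * EW) * iexp (a * W x + b * Y x))"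
        by (rule Bochner_Integration.integral_cong) (auto simp: W0_def exp_add[symmetric] algebra_simps)
      also have "\<dots> = iexp (- a * EW) * (CLINT x|M. iexp (a * W x + b * Y x))" by simp
      also have "\<dots> = K * complex_of_real (exp (- (a^2 * VW) / 2))"
        unfolding cf K_def
        apply (simp add: exp_add[symmetric] exp_of_real[symmetric] algebra_simps flip: of_real_mult)
        apply (rule arg_cong[where f=exp])
        apply (simp add: field_simps)
        done
      finally show ?thesis .
    qed
    have c0: "(CLINT x|M. iexp (b * Y x)) = K" using cf[of 0 b] by (simp add: K_def)
    have ib1: "integrable M (\<lambda>x. iexp (a * W0 x + b * Y x))"
      by (rule integrable_const_bound[where B=1]) auto
    have ib2: "integrable M (\<lambda>x. iexp (b * Y x))"
      by (rule integrable_const_bound[where B=1]) auto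
    have ib3: "integrable M (\<lambda>x. complex_of_real (W0 x) * iexp (b * Y x))"
      by (rule Bochner_Integration.integrable_bound[where f=W0]) (use iW01 in \<open>auto simp: norm_mult\<close>)
    define L where "L = (CLINT x|M. (iexp (a * W0 x) - (1 + \<i> * (a * W0 x))) * iexp (b * Y x))"
    have "L = (CLINT x|M. iexp (a * W0 x + b * Y x) - iexp (b * Y x) - (\<i> * a) * (complex_of_real (W0 x) * iexp (b * Y x)))"
      unfolding L_def
      by (rule Bochner_Integration.integral_cong) (auto simp: exp_add[symmetric] algebra_simps)
    also have "\<dots> = K * complex_of_real (exp (- (a^2 * VW) / 2)) - K - (\<i> * a) * J"
      using ib1 ib2 ib3 c1 c0 by (simp add: J_def)
    finally have Leq: "L = K * complex_of_real (exp (- (a^2 * VW) / 2)) - K - (\<i> * a) * J" .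
    have "norm L \<le> (\<integral>x. norm ((iexp (a * W0 x) - (1 + \<i> * (a * W0 x))) * iexp (b * Y x)) \<partial>M)"
      unfolding L_def by (rule integral_norm_bound)
    also have "\<dots> \<le> (\<integral>x. (a * W0 x)^2 / 2 \<partial>M)"
    proof (rule integral_mono)
      show "integrable M (\<lambda>x. (a * W0 x)^2 / 2)" using iW0 by (simp add: power_mult_distrib)
      have "integrable M (\<lambda>x. (iexp (a * W0 x) - (1 + \<i> * (a * W0 x))) * iexp (b * Y x))"
      proof (rule Bochner_Integration.integrable_bound[where f="\<lambda>x. (a * W0 x)^2 / 2"])
        show "integrable M (\<lambda>x. (a * W0 x)^2 / 2)" using iW0 by (simp add: power_mult_distrib)
        show "AE x in M. norm ((iexp (a * W0 x) - (1 + \<i> * (a * W0 x))) * iexp (b * Y x)) \<le> norm ((a * W0 x)^2 / 2)"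
        proof (intro AE_I2)
          fix x show "norm ((iexp (a * W0 x) - (1 + \<i> * (a * W0 x))) * iexp (b * Y x)) \<le> norm ((a * W0 x)^2 / 2)"
            using iexp_taylor1[of "a * W0 x"] by (simp add: norm_mult)
        qed
      qed auto
      then show "integrable M (\<lambda>x. norm ((iexp (a * W0 x) - (1 + \<i> * (a * W0 x))) * iexp (b * Y x)))"
        by auto
      show "norm ((iexp (a * W0 x) - (1 + \<i> * (a * W0 x))) * iexp (b * Y x)) \<le> (a * W0 x)^2 / 2" for x
        using iexp_taylor1[of "a * W0 x"] by (simp add: norm_mult)
    qed
    also have "\<dots> = a^2 * VW / 2" by (simp add: VW_def power_mult_distrib)
    finally have nL: "norm L \<le> a^2 * VW / 2" .
    have ee: "\<bar>exp (- (a^2 * VW) / 2) - 1\<bar> \<le> a^2 * VW / 2"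
    proof -
      have "1 + (- (a^2 * VW) / 2) \<le> exp (- (a^2 * VW) / 2)" by (rule exp_ge_add_one_self)
      moreover have "exp (- (a^2 * VW) / 2) \<le> 1" using VWnn by (simp add: zero_le_mult_iff)
      ultimately show ?thesis by linarith
    qed
    have nKe: "norm (K * complex_of_real (exp (- (a^2 * VW) / 2)) - K) \<le> a^2 * VW / 2"
    proof -
      have "norm (K * complex_of_real (exp (- (a^2 * VW) / 2)) - K) = norm K * \<bar>exp (- (a^2 * VW) / 2) - 1\<bar>"
      proof -
        have "K * complex_of_real (exp (- (a^2 * VW) / 2)) - K = K * complex_of_real (exp (- (a^2 * VW) / 2) - 1)"
          by (simp add: algebra_simps)
        then show ?thesis by (metis norm_mult norm_of_real of_real_1 of_real_diff)
      qed
      also have "\<dots> \<le> 1 * (a^2 * VW / 2)" using normK ee by (intro mult_mono) auto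
      finally show ?thesis by simp
    qed
    have eqJ: "(\<i> * a) * J = (K * complex_of_real (exp (- (a^2 * VW) / 2)) - K) - L" using Leq by simp
    have "norm ((\<i> * a) * J) \<le> norm (K * complex_of_real (exp (- (a^2 * VW) / 2)) - K) + norm L"
      unfolding eqJ by (rule norm_triangle_ineq4)
    then have "norm ((\<i> * a) * J) \<le> a^2 * VW / 2 + a^2 * VW / 2"
      using nKe nL by linarith
    then have "a * norm J \<le> a * (a * VW)" using apos by (simp add: norm_mult power2_eq_square mult_ac)
    then show ?thesis using apos by (simp add: mult.commute)
  qed
  have "norm J = 0"
  proof (rule ccontr)
    assume "norm J \<noteq> 0"
    then have nJ: "norm J > 0" by simp
    define a where "a = norm J / (2 * (VW + 1))"
    have apos: "a > 0" unfolding a_def using nJ VWnn by simp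
    have "a * VW < norm J" unfolding a_def using nJ VWnn
      apply (simp add: field_simps)
      using mult_nonneg_nonneg[of VW "norm J"] nJ by linarith
    then show False using bnd[OF apos] by simp
  qed
  then show ?thesis by (simp add: J_def W0_def EW_def)
qed



lemma gauss_orth:
  fixes W Y :: "'a \<Rightarrow> real"
  assumes P: "prob_space M"
   and G: "\<And>a b. gaussian_rv M (\<lambda>x. a * W x + b * Y x)"
   and C: "integral\<^sup>L M (\<lambda>x. (W x - integral\<^sup>L M W) * (Y x - integral\<^sup>L M Y)) = 0"
   and B: "B \<in> sets borel"
  shows "integral\<^sup>L M (\<lambda>x. (W x - integral\<^sup>L M W) * indicator B (Y x)) = 0"
proof -
  interpret prob_space M by fact
  have gW: "gaussian_rv M W" using G[of 1 0] by simp
  have gY: "gaussian_rv M Y" using G[of 0 1] by simp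
  note bW = gaussian_basic[OF P gW] and bY = gaussian_basic[OF P gY]
  have [measurable]: "W \<in> borel_measurable M" "Y \<in> borel_measurable M" using bW bY by auto
  show ?thesis
    by (rule fourier_zero_orth[OF P _ _ _ gauss_char_zero[OF P G C] B]) (use bW in auto)
qed

lemma gp_rv:
  assumes "gaussian_process M z" "0 \<le> t"
  shows "gaussian_rv M (z t)"
proof -
  have "gaussian_rv M (\<lambda>x. \<Sum>r\<in>{t}. (\<lambda>_. 1::real) r * z r x)"
    using assms(1)[unfolded gaussian_process_def, rule_format, of "{t}" "\<lambda>_. 1"] assms(2) by simp
  then show ?thesis by simp
qed

lemma gp_lin2:
  assumes "gaussian_process M z" "0 \<le> u" "0 \<le> v" "u \<noteq> v"
  shows "gaussian_rv M (\<lambda>x. a * z u x + b * z v x)"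
proof -
  have "gaussian_rv M (\<lambda>x. \<Sum>r\<in>{u, v}. (\<lambda>r. if r = u then a else b) r * z r x)"
    using assms(1)[unfolded gaussian_process_def, rule_format, of "{u,v}" "\<lambda>r. if r = u then a else b"] assms(2,3)
    by simp
  then show ?thesis using assms(4) by simp
qed

lemma past_props:
  assumes P: "prob_space M" and zm: "\<And>r. 0 \<le> r \<Longrightarrow> z r \<in> borel_measurable M"
  shows "subalgebra M (past_algebra M z s)"
    and "\<And>r. 0 \<le> r \<Longrightarrow> r \<le> s \<Longrightarrow> z r \<in> borel_measurable (past_algebra M z s)"
proof -
  let ?A = "{z r -` A \<inter> space M | r A. 0 \<le> r \<and> r \<le> s \<and> A \<in> sets borel}"
  have sub: "?A \<subseteq> sets M" using zm by (auto intro!: measurable_sets)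
  then have pw: "?A \<subseteq> Pow (space M)" using sets.sets_into_space by blast
  have sp: "space (past_algebra M z s) = space M" unfolding past_algebra_def by (rule space_measure_of_conv)
  have st: "sets (past_algebra M z s) = sigma_sets (space M) ?A"
    unfolding past_algebra_def by (rule sets_measure_of[OF pw])
  show "subalgebra M (past_algebra M z s)"
    unfolding subalgebra_def sp st using sets.sigma_sets_subset[OF sub] by simp
  fix r assume r: "0 \<le> r" "r \<le> s"
  show "z r \<in> borel_measurable (past_algebra M z s)"
  proof (rule measurableI)
    show "x \<in> space (past_algebra M z s) \<Longrightarrow> z r x \<in> space borel" for x by simp
    fix A :: "real set" assume "A \<in> sets borel"
    then have "z r -` A \<inter> space M \<in> ?A" using r by blast
    then show "z r -` A \<inter> space (past_algebra M z s) \<in> sets (past_algebra M z s)"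
      unfolding sp st by (rule sigma_sets.Basic)
  qed
qed

lemma present_props:
  assumes P: "prob_space M" and zm: "z s \<in> borel_measurable M"
  shows "present_algebra M z s = vimage_algebra (space M) (z s) borel"
    and "subalgebra M (present_algebra M z s)"
    and "z s \<in> borel_measurable (present_algebra M z s)"
    and "sets (present_algebra M z s) = {z s -` A \<inter> space M | A. A \<in> sets borel}"
proof -
  show eq: "present_algebra M z s = vimage_algebra (space M) (z s) borel"
    unfolding present_algebra_def vimage_algebra_def by simp
  show st: "sets (present_algebra M z s) = {z s -` A \<inter> space M | A. A \<in> sets borel}"
    unfolding eq by (rule sets_vimage_algebra2) simp
  have "space (present_algebra M z s) = space M" unfolding eq by simp
  moreover have "sets (present_algebra M z s) \<subseteq> sets M" unfolding st using zm by (auto intro: measurable_sets)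
  ultimately show "subalgebra M (present_algebra M z s)" unfolding subalgebra_def by simp
  show "z s \<in> borel_measurable (present_algebra M z s)"
    unfolding eq using measurable_vimage_algebra1[of "z s" "space M" borel] by (simp add: Pi_iff)
qed



lemma funeq:
  fixes M :: "'a measure" and z :: "real \<Rightarrow> 'a \<Rightarrow> real"
  assumes P: "prob_space M" and gp: "gaussian_process M z" and mk: "markovian M z"
    and s: "0 < s" and t: "0 \<le> t" and vpos: "cov_fun M z s s > 0"
  shows "cov_fun M z s s * cov_fun M z (s+t) 0 = cov_fun M z s 0 * cov_fun M z (s+t) s"
proof -
  interpret prob_space M by fact
  define T where "T = s + t"
  have T: "0 \<le> T" "s \<le> T" using s t by (auto simp: T_def)
  have bz: "z u \<in> borel_measurable M \<and> integrable M (z u) \<and> integrable M (\<lambda>x. (z u x)^2)" if "0 \<le> u" for u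
    using gaussian_basic[OF P gp_rv[OF gp that]] by blast
  have zm: "\<And>r. 0 \<le> r \<Longrightarrow> z r \<in> borel_measurable M" using bz by blast
  have [measurable]: "z 0 \<in> borel_measurable M" "z s \<in> borel_measurable M" "z T \<in> borel_measurable M"
    using bz s T by auto
  define m where "m = mean_fun M z"
  define y where "y = (\<lambda>u x. z u x - m u)"
  have ym: "y u \<in> borel_measurable M" if "0 \<le> u" for u using zm[OF that] by (simp add: y_def)
  have yi: "integrable M (y u)" if "0 \<le> u" for u using bz[OF that] by (simp add: y_def)
  have y2: "integrable M (\<lambda>x. (y u x)^2)" if "0 \<le> u" for u
    using L2_shift[OF P] bz[OF that] by (simp add: y_def)
  have yy: "integrable M (\<lambda>x. y u x * y v x)" if "0 \<le> u" "0 \<le> v" for u v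
    by (rule L2_mult) (use ym y2 that in auto)
  have zy: "integrable M (\<lambda>x. z u x * y v x)" if "0 \<le> u" "0 \<le> v" for u v
    by (rule L2_mult) (use ym y2 bz that in auto)
  have Ey: "integral\<^sup>L M (y u) = 0" if "0 \<le> u" for u
    using bz[OF that] by (simp add: y_def m_def mean_fun_def prob_space)
  have cov: "cov_fun M z u v = integral\<^sup>L M (\<lambda>x. y u x * y v x)" for u v
    unfolding cov_fun_def y_def m_def by simp
  define \<rho> where "\<rho> = cov_fun M z 0 s / cov_fun M z s s"
  define W where "W = (\<lambda>x. z 0 x - \<rho> * z s x)"
  have EW: "integral\<^sup>L M W = m 0 - \<rho> * m s"
    using bz[of 0] bz[of s] s by (simp add: W_def m_def mean_fun_def)
  have EY: "integral\<^sup>L M (z s) = m s" by (simp add: m_def mean_fun_def)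
  have WE: "W x - integral\<^sup>L M W = y 0 x - \<rho> * y s x" for x
    unfolding EW by (simp add: W_def y_def algebra_simps)
  have GW: "gaussian_rv M (\<lambda>x. a * W x + b * z s x)" for a b
  proof -
    have "gaussian_rv M (\<lambda>x. a * z 0 x + (b - a * \<rho>) * z s x)" by (rule gp_lin2[OF gp]) (use s in auto)
    moreover have "(\<lambda>x. a * W x + b * z s x) = (\<lambda>x. a * z 0 x + (b - a * \<rho>) * z s x)"
      by (auto simp: W_def algebra_simps)
    ultimately show ?thesis by simp
  qed
  have CW: "integral\<^sup>L M (\<lambda>x. (W x - integral\<^sup>L M W) * (z s x - integral\<^sup>L M (z s))) = 0"
  proof -
    have "integral\<^sup>L M (\<lambda>x. (W x - integral\<^sup>L M W) * (z s x - integral\<^sup>L M (z s)))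
        = integral\<^sup>L M (\<lambda>x. y 0 x * y s x - \<rho> * (y s x * y s x))"
      unfolding WE EY by (simp add: y_def algebra_simps)
    also have "\<dots> = cov_fun M z 0 s - \<rho> * cov_fun M z s s"
      using yy[of 0 s] yy[of s s] s by (simp add: cov)
    also have "\<dots> = 0" using vpos by (simp add: \<rho>_def)
    finally show ?thesis .
  qed
  have orth: "integral\<^sup>L M (\<lambda>x. (y 0 x - \<rho> * y s x) * indicator B (z s x)) = 0" if "B \<in> sets borel" for B
    using gauss_orth[OF P GW CW that] by (simp add: WE)
  define F where "F = past_algebra M z s"
  define G where "G = present_algebra M z s"
  note pp = past_props[OF P zm, where s=s]
  note gg = present_props[where z=z and s=s, OF P \<open>z s \<in> borel_measurable M\<close>]
  have fm: "finite_measure M" by (rule finite_measureI) simp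
  have sfF: "sigma_finite_subalgebra M F"
    by (rule finite_measure_subalgebra_is_sigma_finite)
      (simp add: finite_measure_subalgebra_def finite_measure_subalgebra_axioms_def fm F_def pp(1))
  have sfG: "sigma_finite_subalgebra M G"
    by (rule finite_measure_subalgebra_is_sigma_finite)
      (simp add: finite_measure_subalgebra_def finite_measure_subalgebra_axioms_def fm G_def gg(2))
  interpret PF: sigma_finite_subalgebra M F by fact
  interpret PG: sigma_finite_subalgebra M G by fact
  have zsG[measurable]: "z s \<in> borel_measurable G" using gg(3) by (simp add: G_def)
  have ysG[measurable]: "(\<lambda>x. \<rho> * y s x) \<in> borel_measurable G" unfolding y_def by measurable
  have y0F[measurable]: "y 0 \<in> borel_measurable F"
  proof -
    have [measurable]: "z 0 \<in> borel_measurable F" using pp(2)[where r=0] s by (simp add: F_def)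
    show ?thesis unfolding y_def by measurable
  qed
  have [measurable]: "y 0 \<in> borel_measurable M" "y s \<in> borel_measurable M" using ym s by auto
  have CE0: "AE x in M. real_cond_exp M G (y 0) x = \<rho> * y s x"
  proof (rule PG.real_cond_exp_charact)
    fix A assume "A \<in> sets G"
    then obtain B where B: "B \<in> sets borel" "A = z s -` B \<inter> space M" using gg(4) by (auto simp: G_def)
    have AM: "A \<in> sets M" using B by auto
    have "(\<integral>x\<in>A. y 0 x \<partial>M) - (\<integral>x\<in>A. \<rho> * y s x \<partial>M)
        = integral\<^sup>L M (\<lambda>x. indicator A x *\<^sub>R y 0 x - indicator A x *\<^sub>R (\<rho> * y s x))"
      unfolding set_lebesgue_integral_def
      by (rule Bochner_Integration.integral_diff[symmetric])
         (use integrable_mult_indicator[OF AM, of "y 0"] integrable_mult_indicator[OF AM, of "\<lambda>x. \<rho> * y s x"] yi[of 0] yi[of s] s in auto)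
    also have "\<dots> = integral\<^sup>L M (\<lambda>x. (y 0 x - \<rho> * y s x) * indicator B (z s x))"
      by (rule Bochner_Integration.integral_cong) (auto simp: B(2) indicator_def)
    also have "\<dots> = 0" by (rule orth[OF B(1)])
    finally show "(\<integral>x\<in>A. y 0 x \<partial>M) = (\<integral>x\<in>A. \<rho> * y s x \<partial>M)" by simp
  qed (use yi s in auto)
  define fn where "fn = (\<lambda>(n::nat) (v::real). max (- real n) (min (real n) v))"
  have fnb: "\<bar>fn n v\<bar> \<le> real n" for n v by (simp add: fn_def)
  have fnv: "\<bar>fn n v\<bar> \<le> \<bar>v\<bar>" for n v by (simp add: fn_def)
  have fnm[measurable]: "fn n \<in> borel_measurable borel" for n unfolding fn_def by measurable
  have fnbd: "bounded (range (fn n))" for n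
    using fnb by (intro boundedI[where B="real n"]) auto
  have mk1: "AE x in M. real_cond_exp M F (\<lambda>\<omega>. fn n (z T \<omega>)) x = real_cond_exp M G (\<lambda>\<omega>. fn n (z T \<omega>)) x" for n
    using mk[unfolded markovian_def, rule_format, of s T "fn n"] s T fnbd by (simp add: F_def G_def)
  have key: "integral\<^sup>L M (\<lambda>x. fn n (z T x) * y 0 x) = \<rho> * integral\<^sup>L M (\<lambda>x. fn n (z T x) * y s x)" for n
  proof -
    define g where "g = (\<lambda>\<omega>. fn n (z T \<omega>))"
    have gm[measurable]: "g \<in> borel_measurable M" unfolding g_def by measurable
    have ig: "integrable M (\<lambda>x. h x * g x)" if "integrable M h" "h \<in> borel_measurable M" for h
    proof (rule Bochner_Integration.integrable_bound[where f="\<lambda>x. real n * h x"])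
      show "integrable M (\<lambda>x. real n * h x)" using that by simp
      show "AE x in M. norm (h x * g x) \<le> norm (real n * h x)"
      proof (intro AE_I2)
        fix x
        have "\<bar>h x\<bar> * \<bar>g x\<bar> \<le> \<bar>h x\<bar> * real n" using fnb[of n "z T x"] by (intro mult_left_mono) (auto simp: g_def)
        then show "norm (h x * g x) \<le> norm (real n * h x)" by (simp add: abs_mult mult.commute)
      qed
    qed (use that in auto)
    have i0: "integrable M (\<lambda>x. y 0 x * g x)" by (rule ig) (use yi in auto)
    have "integral\<^sup>L M (\<lambda>x. fn n (z T x) * y 0 x) = integral\<^sup>L M (\<lambda>x. y 0 x * g x)"
      by (simp add: g_def mult.commute)
    also have "\<dots> = integral\<^sup>L M (\<lambda>x. y 0 x * real_cond_exp M F g x)"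
      by (rule PF.real_cond_exp_intg(2)[symmetric]) (use i0 in auto)
    also have "\<dots> = integral\<^sup>L M (\<lambda>x. y 0 x * real_cond_exp M G g x)"
      by (rule integral_cong_AE) (use mk1[of n] in \<open>auto simp: g_def\<close>)
    also have "\<dots> = integral\<^sup>L M (\<lambda>x. real_cond_exp M G g x * real_cond_exp M G (y 0) x)"
    proof -
      have i1: "integrable M (\<lambda>x. y 0 x * real_cond_exp M F g x)"
        by (rule PF.real_cond_exp_intg(1)) (use i0 in auto)
      have i2: "integrable M (\<lambda>x. real_cond_exp M G g x * y 0 x)"
        using i1 by (rule integrable_cong_AE[THEN iffD1, rotated 3])
          (use mk1[of n] in \<open>auto simp: g_def mult.commute\<close>)
      have "integral\<^sup>L M (\<lambda>x. real_cond_exp M G g x * real_cond_exp M G (y 0) x)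
          = integral\<^sup>L M (\<lambda>x. real_cond_exp M G g x * y 0 x)"
        by (rule PG.real_cond_exp_intg(2)) (use i2 in auto)
      then show ?thesis by (simp add: mult.commute)
    qed
    also have "\<dots> = integral\<^sup>L M (\<lambda>x. real_cond_exp M G g x * (\<rho> * y s x))"
      by (rule integral_cong_AE) (use CE0 in auto)
    also have "\<dots> = integral\<^sup>L M (\<lambda>x. (\<rho> * y s x) * real_cond_exp M G g x)"
      by (simp add: mult.commute)
    also have "\<dots> = integral\<^sup>L M (\<lambda>x. (\<rho> * y s x) * g x)"
      by (rule PG.real_cond_exp_intg(2)) (rule ig, use yi s in auto)
    also have "\<dots> = \<rho> * integral\<^sup>L M (\<lambda>x. fn n (z T x) * y s x)"
      by (simp add: g_def mult_ac)
    finally show ?thesis .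
  qed
  have lim: "(\<lambda>n. integral\<^sup>L M (\<lambda>x. fn n (z T x) * y u x)) \<longlonglongrightarrow> integral\<^sup>L M (\<lambda>x. z T x * y u x)"
    if u: "0 \<le> u" for u
  proof (rule integral_dominated_convergence[where w="\<lambda>x. \<bar>z T x * y u x\<bar>"])
    show "integrable M (\<lambda>x. \<bar>z T x * y u x\<bar>)" using zy[OF T(1) u] by auto
    show "(\<lambda>x. z T x * y u x) \<in> borel_measurable M" using ym[OF u] by measurable
    show "(\<lambda>x. fn n (z T x) * y u x) \<in> borel_measurable M" for n using ym[OF u] by measurable
    show "AE x in M. (\<lambda>n. fn n (z T x) * y u x) \<longlonglongrightarrow> z T x * y u x"
    proof (intro AE_I2 tendsto_mult_right)
      fix x
      show "(\<lambda>n. fn n (z T x)) \<longlonglongrightarrow> z T x"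
      proof (rule tendsto_eventually)
        show "\<forall>\<^sub>F n in sequentially. fn n (z T x) = z T x"
          unfolding eventually_sequentially
        proof (intro exI allI impI)
          fix n assume "nat \<lceil>\<bar>z T x\<bar>\<rceil> \<le> n"
          then have "\<bar>z T x\<bar> \<le> real n" by linarith
          then show "fn n (z T x) = z T x" by (auto simp: fn_def)
        qed
      qed
    qed
    show "AE x in M. norm (fn n (z T x) * y u x) \<le> \<bar>z T x * y u x\<bar>" for n
      using fnv by (auto simp: abs_mult intro!: mult_right_mono)
  qed
  have "(\<lambda>n. integral\<^sup>L M (\<lambda>x. fn n (z T x) * y 0 x)) \<longlonglongrightarrow> \<rho> * integral\<^sup>L M (\<lambda>x. z T x * y s x)"
    unfolding key by (intro tendsto_mult_left lim) (use s in auto)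
  then have eq1: "integral\<^sup>L M (\<lambda>x. z T x * y 0 x) = \<rho> * integral\<^sup>L M (\<lambda>x. z T x * y s x)"
    using lim[of 0] LIMSEQ_unique by auto
  have zc: "integral\<^sup>L M (\<lambda>x. z T x * y u x) = cov_fun M z T u" if u: "0 \<le> u" for u
  proof -
    have "integral\<^sup>L M (\<lambda>x. z T x * y u x) = integral\<^sup>L M (\<lambda>x. y T x * y u x + m T * y u x)"
      by (simp add: y_def algebra_simps)
    also have "\<dots> = cov_fun M z T u + m T * integral\<^sup>L M (y u)"
      using yy[OF T(1) u] yi[OF u] by (simp add: cov)
    finally show ?thesis using Ey[OF u] by simp
  qed
  have sym: "cov_fun M z 0 s = cov_fun M z s 0" unfolding cov_fun_def by (simp add: mult.commute)
  have "cov_fun M z T 0 = \<rho> * cov_fun M z T s" using eq1 zc[of 0] zc[of s] s by simp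
  then show ?thesis using vpos unfolding \<rho>_def T_def sym by (simp add: field_simps)
qed



lemma rho_one:
  fixes \<rho> :: "real \<Rightarrow> real"
  assumes mult: "\<And>a b. 0 \<le> a \<Longrightarrow> 0 \<le> b \<Longrightarrow> \<rho> (a + b) = \<rho> a * \<rho> b"
    and dl: "\<delta> > 0" and C: "C \<ge> 0" and near: "\<And>h. 0 < h \<Longrightarrow> h < \<delta> \<Longrightarrow> 1 - C * h^2 \<le> \<rho> h"
    and d: "0 < d"
  shows "\<rho> d \<ge> 1"
proof (rule ccontr)
  assume "\<not> \<rho> d \<ge> 1"
  then have eps: "1 - \<rho> d > 0" by simp
  have pow: "\<rho> (real (Suc n) * h) = \<rho> h ^ Suc n" if "0 \<le> h" for n h
  proof (induction n)
    case 0 then show ?case by simp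
  next
    case (Suc n)
    have "real (Suc (Suc n)) * h = h + real (Suc n) * h" by (simp add: algebra_simps)
    then have "\<rho> (real (Suc (Suc n)) * h) = \<rho> h * \<rho> (real (Suc n) * h)" using mult that by simp
    then show ?case using Suc by simp
  qed
  obtain n :: nat where n: "max (max (d / \<delta>) (C * d^2 / (1 - \<rho> d))) (C * d^2) < real n"
    using reals_Archimedean2 by blast
  have n1: "d / \<delta> < real n" "C * d^2 / (1 - \<rho> d) < real n" "C * d^2 < real n" using n by auto
  have npos: "real n > 0" using n1(1) d dl by (smt (verit) divide_pos_pos)
  define h where "h = d / real n"
  have hpos: "h > 0" unfolding h_def using d npos by simp
  have hd: "h < \<delta>" unfolding h_def using n1(1) npos dl by (simp add: field_simps)
  have nh: "real n * h = d" unfolding h_def using npos by simp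
  have Ch: "C * h^2 = C * d^2 / real n / real n" unfolding h_def by (simp add: power2_eq_square field_simps)
  have Ch1: "C * d^2 / real n < 1" using n1(3) npos by (simp add: field_simps)
  obtain k where k: "n = Suc k" using npos by (cases n) auto
  have ge1: "real n \<ge> 1" using k by simp
  have X0: "0 \<le> C * d^2 / real n" using C npos by simp
  have "C * d^2 / real n / real n \<le> C * d^2 / real n / 1"
    by (rule divide_left_mono) (use X0 ge1 in auto)
  then have Ch2: "C * h^2 \<le> C * d^2 / real n" unfolding Ch by simp
  have a0: "0 \<le> 1 - C * h^2" using Ch1 Ch2 by linarith
  have "(1 - C * h^2) ^ n \<le> \<rho> h ^ n" using a0 near[OF hpos hd] by (intro power_mono) auto
  also have "\<rho> h ^ n = \<rho> d" using pow[of h k] hpos nh k by simp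
  finally have r1: "(1 - C * h^2) ^ n \<le> \<rho> d" .
  have "1 + real n * (- (C * h^2)) \<le> (1 + (- (C * h^2))) ^ n"
    by (rule Bernoulli_inequality) (use a0 in simp)
  then have "1 - real n * (C * h^2) \<le> \<rho> d" using r1 by simp
  moreover have "real n * (C * h^2) = C * d^2 / real n" unfolding Ch using npos by simp
  moreover have "C * d^2 / real n < 1 - \<rho> d" using n1(2) eps npos by (simp add: field_simps)
  ultimately show False by linarith
qed



lemma L2_diff:
  fixes f g :: "'a \<Rightarrow> real"
  assumes [measurable]: "f \<in> borel_measurable M" "g \<in> borel_measurable M"
    and "integrable M (\<lambda>x. (f x)^2)" "integrable M (\<lambda>x. (g x)^2)"
  shows "integrable M (\<lambda>x. (f x - g x)^2)"
proof -
  have "(\<lambda>x. (f x - g x)^2) = (\<lambda>x. (f x)^2 - 2 * (f x * g x) + (g x)^2)"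
    by (auto simp: power2_eq_square algebra_simps)
  then show ?thesis using assms L2_mult[of f M g] by simp
qed

lemma sq_le_aux: "(a::real)^2 \<le> 2 * (a - b)^2 + 2 * b^2"
proof -
  have "0 \<le> (a - 2 * b)^2" by simp
  then show ?thesis by (simp add: power2_eq_square algebra_simps)
qed

theorem lemma1:
  fixes M :: "'a measure" and z :: "real \<Rightarrow> 'a \<Rightarrow> real"
  assumes "prob_space M"
    and "gaussian_process M z"
    and "trend_stationary M z"
    and "mean_fun M z differentiable_on {0..}"
    and "ms_differentiable M z"
    and "markovian M z"
  shows "(\<forall>u v u' v'. u \<ge> 0 \<longrightarrow> v \<ge> 0 \<longrightarrow> u' \<ge> 0 \<longrightarrow> v' \<ge> 0 \<longrightarrow>
            cov_fun M z u v = cov_fun M z u' v') \<and>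
         (\<forall>u v. u \<ge> 0 \<longrightarrow> v \<ge> 0 \<longrightarrow>
            (AE x in M. z u x - mean_fun M z u = z v x - mean_fun M z v))"
proof -
  note P = assms(1) and gp = assms(2) and mk = assms(6)
  interpret prob_space M by fact
  obtain k where k: "\<And>u v. 0 \<le> u \<Longrightarrow> 0 \<le> v \<Longrightarrow> cov_fun M z u v = k (u - v)"
    using assms(3) unfolding trend_stationary_def by blast
  have bz: "z u \<in> borel_measurable M \<and> integrable M (z u) \<and> integrable M (\<lambda>x. (z u x)^2)" if "0 \<le> u" for u
    using gaussian_basic[OF P gp_rv[OF gp that]] by blast
  have zm: "\<And>r. 0 \<le> r \<Longrightarrow> z r \<in> borel_measurable M" using bz by blast
  define m where "m = mean_fun M z"
  define y where "y = (\<lambda>u x. z u x - m u)"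
  have ym: "y u \<in> borel_measurable M" if "0 \<le> u" for u using zm[OF that] by (simp add: y_def)
  have yi: "integrable M (y u)" if "0 \<le> u" for u using bz[OF that] by (simp add: y_def)
  have y2: "integrable M (\<lambda>x. (y u x)^2)" if "0 \<le> u" for u
    using L2_shift[OF P] bz[OF that] by (simp add: y_def)
  have yy: "integrable M (\<lambda>x. y u x * y v x)" if "0 \<le> u" "0 \<le> v" for u v
    by (rule L2_mult) (use ym y2 that in auto)
  have cov: "cov_fun M z u v = integral\<^sup>L M (\<lambda>x. y u x * y v x)" for u v
    unfolding cov_fun_def y_def m_def by simp
  define \<sigma>2 where "\<sigma>2 = cov_fun M z 0 0"
  have diag: "cov_fun M z u u = \<sigma>2" if "0 \<le> u" for u using k[OF that that] k[of 0 0] by (simp add: \<sigma>2_def)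
  have sym: "cov_fun M z u v = cov_fun M z v u" for u v by (simp add: cov_fun_def mult.commute)
  have dsq: "integral\<^sup>L M (\<lambda>x. (y u x - y v x)^2) = 2 * \<sigma>2 - 2 * cov_fun M z u v"
    if "0 \<le> u" "0 \<le> v" for u v
  proof -
    have "(\<lambda>x. (y u x - y v x)^2) = (\<lambda>x. y u x * y u x - 2 * (y u x * y v x) + y v x * y v x)"
      by (auto simp: power2_eq_square algebra_simps)
    then show ?thesis using yy[of u u] yy[of u v] yy[of v v] that diag[of u] diag[of v]
      by (simp add: cov)
  qed
  have ssq: "integral\<^sup>L M (\<lambda>x. (y u x + y v x)^2) = 2 * \<sigma>2 + 2 * cov_fun M z u v"
    if "0 \<le> u" "0 \<le> v" for u v
  proof -
    have "(\<lambda>x. (y u x + y v x)^2) = (\<lambda>x. y u x * y u x + 2 * (y u x * y v x) + y v x * y v x)"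
      by (auto simp: power2_eq_square algebra_simps)
    then show ?thesis using yy[of u u] yy[of u v] yy[of v v] that diag[of u] diag[of v]
      by (simp add: cov)
  qed
  have covle: "cov_fun M z u v \<le> \<sigma>2" if "0 \<le> u" "0 \<le> v" for u v
  proof -
    have "0 \<le> integral\<^sup>L M (\<lambda>x. (y u x - y v x)^2)" by (rule integral_nonneg_AE) simp
    then show ?thesis using dsq[OF that] by simp
  qed
  have covge: "- \<sigma>2 \<le> cov_fun M z u v" if "0 \<le> u" "0 \<le> v" for u v
  proof -
    have "0 \<le> integral\<^sup>L M (\<lambda>x. (y u x + y v x)^2)" by (rule integral_nonneg_AE) simp
    then show ?thesis using ssq[OF that] by simp
  qed
  have main: "cov_fun M z u v = \<sigma>2" if uv: "0 \<le> u" "0 \<le> v" for u v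
  proof (cases "\<sigma>2 = 0")
    case True
    then show ?thesis using covle[OF uv] covge[OF uv] by simp
  next
    case False
    have "\<sigma>2 \<ge> 0" using covle[of 0 0] covge[of 0 0] by simp
    with False have spos: "\<sigma>2 > 0" by simp
    define \<rho> where "\<rho> = (\<lambda>d. cov_fun M z d 0 / \<sigma>2)"
    have FE: "\<rho> (a + b) = \<rho> a * \<rho> b" if ab: "0 \<le> a" "0 \<le> b" for a b
    proof (cases "a = 0")
      case True
      then show ?thesis using diag[of 0] spos by (simp add: \<rho>_def)
    next
      case False
      with ab have apos: "a > 0" by simp
      have "cov_fun M z a a * cov_fun M z (a + b) 0 = cov_fun M z a 0 * cov_fun M z (a + b) a"
        by (rule funeq[OF P gp mk apos ab(2)]) (use diag[of a] spos ab in simp)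
      moreover have "cov_fun M z (a + b) a = cov_fun M z b 0" using k[of "a + b" a] k[of b 0] ab by simp
      ultimately have "\<sigma>2 * cov_fun M z (a + b) 0 = cov_fun M z a 0 * cov_fun M z b 0"
        using diag[of a] ab by simp
      then show ?thesis using spos by (simp add: \<rho>_def field_simps)
    qed
    obtain \<delta> C where dl: "\<delta> > 0" and C: "C \<ge> 0" and near: "\<And>h. 0 < h \<Longrightarrow> h < \<delta> \<Longrightarrow> 1 - C * h^2 \<le> \<rho> h"
    proof -
      obtain D where Dm[measurable]: "D \<in> borel_measurable M" and D2: "integrable M (\<lambda>x. (D x)^2)"
        and Dl: "((\<lambda>h. integral\<^sup>L M (\<lambda>x. ((z (0 + h) x - z 0 x) / h - D x)^2)) \<longlongrightarrow> 0) (at 0 within {-0..})"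
        using assms(5) unfolding ms_differentiable_def by blast
      have "\<forall>\<^sub>F h in at 0 within {0..}. integral\<^sup>L M (\<lambda>x. ((z h x - z 0 x) / h - D x)^2) < 1"
        using order_tendstoD(2)[OF Dl, of 1] by simp
      then obtain \<delta> where dl: "\<delta> > 0" and
        dp: "\<And>h. h \<in> {0..} \<Longrightarrow> h \<noteq> 0 \<and> dist h 0 < \<delta> \<Longrightarrow> integral\<^sup>L M (\<lambda>x. ((z h x - z 0 x) / h - D x)^2) < 1"
        unfolding eventually_at by blast
      define C where "C = (1 + integral\<^sup>L M (\<lambda>x. (D x)^2)) / \<sigma>2"
      have C: "C \<ge> 0" unfolding C_def using spos
        by (intro divide_nonneg_nonneg) (auto intro!: add_nonneg_nonneg integral_nonneg_AE)
      have "1 - C * h^2 \<le> \<rho> h" if h: "0 < h" "h < \<delta>" for h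
      proof -
        have h0: "0 \<le> h" using h by simp
        have [measurable]: "z h \<in> borel_measurable M" "z 0 \<in> borel_measurable M" using zm h0 by auto
        define X where "X = (\<lambda>x. z h x - z 0 x)"
        have [measurable]: "X \<in> borel_measurable M" unfolding X_def by measurable
        have X2: "integrable M (\<lambda>x. (X x)^2)" unfolding X_def by (rule L2_diff) (use bz h0 in auto)
        have X1: "integrable M X" unfolding X_def using bz[of h] bz[of 0] h0 by auto
        have Xh2: "integrable M (\<lambda>x. (X x / h)^2)" using X2 by (simp add: power_divide)
        have XD: "integrable M (\<lambda>x. (X x / h - D x)^2)" by (rule L2_diff) (use Xh2 D2 in auto)
        have I1: "integral\<^sup>L M (\<lambda>x. (X x / h - D x)^2) < 1" using dp[of h] h by (simp add: X_def)
        have I2: "integral\<^sup>L M (\<lambda>x. (X x / h)^2) \<le> integral\<^sup>L M (\<lambda>x. 2 * (X x / h - D x)^2 + 2 * (D x)^2)"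
        proof (rule integral_mono)
          show "integrable M (\<lambda>x. 2 * (X x / h - D x)^2 + 2 * (D x)^2)" using XD D2 by simp
          show "(X x / h)^2 \<le> 2 * (X x / h - D x)^2 + 2 * (D x)^2" for x
            by (rule sq_le_aux)
        qed (use Xh2 in auto)
        have I2': "integral\<^sup>L M (\<lambda>x. (X x / h)^2) \<le> 2 + 2 * integral\<^sup>L M (\<lambda>x. (D x)^2)"
          using I2 I1 XD D2 by simp
        have I3: "integral\<^sup>L M (\<lambda>x. (X x)^2) = h^2 * integral\<^sup>L M (\<lambda>x. (X x / h)^2)"
        proof -
          have "(\<lambda>x. (X x)^2) = (\<lambda>x. h^2 * (X x / h)^2)" using h by (auto simp: power_divide)
          then show ?thesis by simp
        qed
        have I4: "integral\<^sup>L M (\<lambda>x. (y h x - y 0 x)^2) \<le> integral\<^sup>L M (\<lambda>x. (X x)^2)"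
        proof -
          define c where "c = m h - m 0"
          have cX: "integral\<^sup>L M X = c" unfolding c_def X_def m_def mean_fun_def using bz[of h] bz[of 0] h0 by simp
          have "(\<lambda>x. (y h x - y 0 x)^2) = (\<lambda>x. (X x)^2 - 2 * c * X x + c^2)"
            by (auto simp: y_def X_def c_def power2_eq_square algebra_simps)
          then have "integral\<^sup>L M (\<lambda>x. (y h x - y 0 x)^2) = integral\<^sup>L M (\<lambda>x. (X x)^2) - c^2"
            using X2 X1 cX by (simp add: prob_space power2_eq_square)
          then show ?thesis by simp
        qed
        have "2 * \<sigma>2 - 2 * cov_fun M z h 0 \<le> h^2 * (2 + 2 * integral\<^sup>L M (\<lambda>x. (D x)^2))"
          using dsq[of h 0] h0 I4 I3 I2' by (smt (verit) mult_left_mono zero_le_power2)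
        then have "\<sigma>2 - cov_fun M z h 0 \<le> h^2 * (1 + integral\<^sup>L M (\<lambda>x. (D x)^2))" by (simp add: algebra_simps)
        then have "(\<sigma>2 - h^2 * (1 + integral\<^sup>L M (\<lambda>x. (D x)^2))) / \<sigma>2 \<le> cov_fun M z h 0 / \<sigma>2"
          using spos by (intro divide_right_mono) auto
        moreover have "1 - C * h^2 = (\<sigma>2 - h^2 * (1 + integral\<^sup>L M (\<lambda>x. (D x)^2))) / \<sigma>2"
          unfolding C_def using spos by (simp add: field_simps)
        ultimately show ?thesis unfolding \<rho>_def by simp
      qed
      then show ?thesis using that dl C by blast
    qed
    have r1: "cov_fun M z d 0 = \<sigma>2" if d: "0 \<le> d" for d
    proof (cases "d = 0")
      case True then show ?thesis using diag[of 0] by simp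
    next
      case False
      with d have dpos: "d > 0" by simp
      have "\<rho> d \<ge> 1" by (rule rho_one[OF FE dl C near dpos])
      then have "cov_fun M z d 0 \<ge> \<sigma>2" using spos by (simp add: \<rho>_def field_simps)
      then show ?thesis using covle[of d 0] d by simp
    qed
    show ?thesis
    proof (cases "v \<le> u")
      case True
      then have "cov_fun M z u v = cov_fun M z (u - v) 0" using k[of u v] k[of "u - v" 0] uv by simp
      then show ?thesis using r1[of "u - v"] True by simp
    next
      case False
      then have "cov_fun M z v u = cov_fun M z (v - u) 0" using k[of v u] k[of "v - u" 0] uv by simp
      then show ?thesis using r1[of "v - u"] False sym[of u v] by simp
    qed
  qed
  show ?thesis
  proof (intro conjI allI impI)
    fix u v u' v' :: real
    assume "0 \<le> u" "0 \<le> v" "0 \<le> u'" "0 \<le> v'"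
    then show "cov_fun M z u v = cov_fun M z u' v'" using main by simp
  next
    fix u v :: real assume uv: "0 \<le> u" "0 \<le> v"
    have i: "integrable M (\<lambda>x. (y u x - y v x)^2)" by (rule L2_diff) (use ym y2 uv in auto)
    have "integral\<^sup>L M (\<lambda>x. (y u x - y v x)^2) = 0" using dsq[OF uv] main[OF uv] by simp
    then have "AE x in M. (y u x - y v x)^2 = 0" using integral_nonneg_eq_0_iff_AE[OF i] by simp
    then show "AE x in M. z u x - mean_fun M z u = z v x - mean_fun M z v"
      by eventually_elim (simp add: y_def m_def)
  qed
qed


end
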